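(* Let $\Sigma\in\mathcal{G}_n$, let $Q_0$ be the unique regular rational orthogonal matrix with $Q_0^{\rm T}S(\Sigma)Q_0=S(\Sigma^{\rm T})$, with level $\ell_0$, and set $\bar Q_0=\ell_0Q_0$. Let $p$ be an odd prime with $p\nmid\ell_0$. Then, over $\mathbb{F}_p$: if $n$ is even, $\mathrm{rank}(\ell_0I-\bar Q_0)=\mathrm{rank}(\ell_0I+\bar Q_0)=\frac n2$; if $n$ is odd, $\mathrm{rank}(\ell_0I-\bar Q_0)=\frac{n-1}2$ and $\mathrm{rank}(\ell_0I+\bar Q_0)=\frac{n+1}2$.
   Context: An oriented graph on vertices $v_1,\dots,v_n$ is a simple graph with each edge directed; its skew-adjacency matrix $S(\Sigma)=(s_{ij})$ has $s_{ij}=1$ if $(v_i,v_j)$ is an arc, $-1$ if $(v_j,v_i)$ is an arc, $0$ otherwise. The converse $\Sigma^{\rm T}$ reverses every arc, so $S(\Sigma^{\rm T})=-S(\Sigma)$. With $e$ the all-one vector, $W(\Sigma)=[e,Se,\dots,S^{n-1}e]$, $S=S(\Sigma)$. $\mathcal{G}_n$ is the set of $n$-vertex oriented graphs with $2^{-\lfloor n/2\rfloor}\det W(\Sigma)$ an odd square-free integer. A rational orthogonal matrix $Q$ is regular if $Qe=e$; its level is the least positive integer $k$ with $kQ$ integral. Since $\det W(\Sigma)\neq0$, $Q_0$ exists and is unique. *)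

theory Defs
  imports "Jordan_Normal_Form.DL_Rank" "Berlekamp_Zassenhaus.Finite_Field"
    "HOL-Computational_Algebra.Squarefree"
begin

text \<open>Oriented graph on vertices 0..n-1 (standing for v_1..v_n), given by its arc set.\<close>
definition oriented_graph :: "nat \<Rightarrow> (nat \<times> nat) set \<Rightarrow> bool" where
  "oriented_graph n Arc \<longleftrightarrow> Arc \<subseteq> {0..<n} \<times> {0..<n} \<and>
     (\<forall>i j. (i, j) \<in> Arc \<longrightarrow> (j, i) \<notin> Arc)"

definition converse_graph :: "(nat \<times> nat) set \<Rightarrow> (nat \<times> nat) set" where
  "converse_graph Arc = {(j, i). (i, j) \<in> Arc}"

definition skew_adj :: "nat \<Rightarrow> (nat \<times> nat) set \<Rightarrow> int mat" where
  "skew_adj n Arc = mat n n (\<lambda>(i, j). if (i, j) \<in> Arc then 1 else if (j, i) \<in> Arc then -1 else 0)"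

definition walk_matrix :: "nat \<Rightarrow> (nat \<times> nat) set \<Rightarrow> int mat" where
  "walk_matrix n Arc = mat n n (\<lambda>(i, j). ((skew_adj n Arc ^\<^sub>m j) *\<^sub>v vec n (\<lambda>_. 1)) $ i)"

definition in_G :: "nat \<Rightarrow> (nat \<times> nat) set \<Rightarrow> bool" where
  "in_G n Arc \<longleftrightarrow> oriented_graph n Arc \<and>
     (\<exists>m::int. det (walk_matrix n Arc) = 2 ^ (n div 2) * m \<and> odd m \<and> squarefree m)"

definition regular_rat_orthogonal :: "nat \<Rightarrow> rat mat \<Rightarrow> bool" where
  "regular_rat_orthogonal n Q \<longleftrightarrow> Q \<in> carrier_mat n n \<and> Q\<^sup>T * Q = 1\<^sub>m n \<and>
     Q *\<^sub>v vec n (\<lambda>_. 1) = vec n (\<lambda>_. 1)"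

definition level :: "rat mat \<Rightarrow> nat" where
  "level Q = (LEAST k::nat. 0 < k \<and>
     (\<forall>i < dim_row Q. \<forall>j < dim_col Q. of_nat k * Q $$ (i, j) \<in> \<int>))"

text \<open>The integral matrix k Q (entries are integers when k Q is integral).\<close>
definition scaled_int_mat :: "nat \<Rightarrow> rat mat \<Rightarrow> int mat" where
  "scaled_int_mat k Q = mat (dim_row Q) (dim_col Q) (\<lambda>(i, j). \<lfloor>of_nat k * Q $$ (i, j)\<rfloor>)"

text \<open>Reduction of an integer matrix modulo p = CARD('p).\<close>
definition mod_p_mat :: "int mat \<Rightarrow> 'p::prime_card mod_ring mat" where
  "mod_p_mat A = map_mat of_int A"

end

theory Submission
  imports Defs
begin



lemma (in vec_space) rank_le_card_span:
  assumes X: "X \<in> carrier_mat n m" and T: "T \<subseteq> carrier_vec n" "finite T"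
    and sub: "set (cols X) \<subseteq> span T"
  shows "rank X \<le> card T"
proof -
  let ?C = "set (cols X)"
  have C: "?C \<subseteq> carrier_vec n" using X cols_dim by blast
  have sp: "span ?C \<subseteq> span T" using span_subsetI[OF T(1) sub] .
  have sT: "VectorSpace.subspace class_ring (span T) V" using span_is_subspace T(1) by simp
  have sC: "VectorSpace.subspace class_ring (span ?C) V" using span_is_subspace C by simp
  have vsT: "vectorspace class_ring (vs (span T))" using sT subspace_is_vs by simp
  have sub2: "VectorSpace.subspace class_ring (span ?C) (vs (span T))"
    using nested_subspaces[OF sT sC sp] .
  have fdT: "vectorspace.fin_dim class_ring (vs (span T))" using fin_dim_span[of T] T by simp
  have fdC: "vectorspace.fin_dim class_ring ((vs (span T))\<lparr>carrier := span ?C\<rparr>)"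
    using fin_dim_span[of ?C] C by simp
  have d1: "vectorspace.dim class_ring ((vs (span T))\<lparr>carrier := span ?C\<rparr>) \<le> vectorspace.dim class_ring (vs (span T))"
    using vectorspace.subspace_dim[OF vsT sub2 fdT fdC] .
  have "T \<subseteq> span T" using in_own_span T(1) by simp
  have gen: "LinearCombinations.module.span class_ring (vs (span T)) T = carrier (vs (span T))"
    using span_li_not_depend(1)[OF \<open>T \<subseteq> span T\<close> span_is_submodule[OF T(1)]] by auto
  have d2: "vectorspace.dim class_ring (vs (span T)) \<le> card T"
    using vectorspace.gen_ge_dim[OF vsT T(2) _ gen] \<open>T \<subseteq> span T\<close> by simp
  show ?thesis unfolding rank_def using d1 d2 by simp
qed

lemma (in vec_space) mult_in_span_cols:
  assumes X: "X \<in> carrier_mat n m" and v: "v \<in> carrier_vec m"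
  shows "X *\<^sub>v v \<in> span (set (cols X))"
proof -
  have C: "set (cols X) \<subseteq> carrier_vec n" using X cols_dim by blast
  have "lincomb_list (\<lambda>i. v $ i) (cols X) = mat_of_cols n (cols X) *\<^sub>v vec (length (cols X)) (\<lambda>i. v $ i)"
    by (rule lincomb_list_as_mat_mult, use C in auto)
  also have "mat_of_cols n (cols X) = X" using X mat_of_cols_cols[of X] by simp
  also have "vec (length (cols X)) (\<lambda>i. v $ i) = v" using X v by (auto intro!: eq_vecI)
  finally have "X *\<^sub>v v \<in> span_list (cols X)" unfolding span_list_def by (metis (mono_tags, lifting) mem_Collect_eq)
  then show ?thesis using span_list_as_span[OF C] by simp
qed

lemma (in vec_space) cols_mult_in_span:
  assumes X: "X \<in> carrier_mat n m" and Y: "Y \<in> carrier_mat m k"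
  shows "set (cols (X * Y)) \<subseteq> span (set (cols X))"
proof
  fix c assume "c \<in> set (cols (X * Y))"
  then obtain j where j: "j < k" "c = col (X * Y) j" using X Y
    by (metis cols_length cols_nth in_set_conv_nth carrier_matD(2) index_mult_mat(3))
  have "c = X *\<^sub>v col Y j" unfolding j(2) by (rule col_mult2[OF X Y j(1)])
  then show "c \<in> span (set (cols X))" using mult_in_span_cols[OF X] Y j by simp
qed



lemma common_denom:
  fixes f :: "'b \<Rightarrow> rat"
  assumes "finite I"
  shows "\<exists>d::int. d > 0 \<and> (\<forall>i\<in>I. of_int d * f i \<in> \<int>)"
  using assms
proof (induction I rule: finite_induct)
  case empty
  then show ?case by (intro exI[of _ 1]) auto
next
  case (insert x I)
  then obtain d where d: "d > 0" "\<forall>i\<in>I. of_int d * f i \<in> \<int>" by blast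
  obtain a b where ab: "quotient_of (f x) = (a, b)" by (cases "quotient_of (f x)") auto
  have b: "b > 0" using quotient_of_denom_pos[OF ab] .
  have fx: "f x = of_int a / of_int b" using quotient_of_div[OF ab] .
  show ?case
  proof (intro exI[of _ "d * b"] conjI ballI)
    show "d * b > 0" using d b by simp
    fix i assume "i \<in> insert x I"
    then show "of_int (d * b) * f i \<in> \<int>"
    proof
      assume "i = x"
      have bx: "of_int b * f x = of_int a" using fx b by simp
      have "of_int (d * b) * f i = of_int d * (of_int b * f x)" using \<open>i = x\<close> by (simp only: of_int_mult mult.assoc)
      also have "\<dots> = of_int (d * a)" using bx by simp
      finally show ?thesis by (metis Ints_of_int)
    next
      assume "i \<in> I"
      then have "of_int d * f i \<in> \<int>" using d by blast
      then have "of_int b * (of_int d * f i) \<in> \<int>" by simp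
      then show ?thesis by (simp add: ac_simps)
    qed
  qed
qed

lemma rat_kernel_to_int:
  fixes N :: "int mat" and v :: "rat vec" and p :: int
  assumes N: "N \<in> carrier_mat n r" and v: "v \<in> carrier_vec r" and v0: "v \<noteq> 0\<^sub>v r"
    and Nv: "map_mat of_int N *\<^sub>v v = 0\<^sub>v n" and p: "prime p"
  shows "\<exists>z. z \<in> carrier_vec r \<and> N *\<^sub>v z = 0\<^sub>v n \<and> (\<exists>k<r. \<not> p dvd z $ k)"
proof -
  obtain d where d: "d > 0" "\<forall>k\<in>{..<r}. of_int d * v $ k \<in> \<int>"
    using common_denom[of "{..<r}" "\<lambda>k. v $ k"] by auto
  define y where "y k = \<lfloor>of_int d * v $ k\<rfloor>" for k
  have y: "of_int (y k) = of_int d * v $ k" if "k < r" for k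
    using d(2) that unfolding y_def by (metis Ints_cases floor_of_int lessThan_iff)
  obtain k0 where k0: "k0 < r" "v $ k0 \<noteq> 0" using v v0 by (metis eq_vecI carrier_vecD index_zero_vec)
  define g where "g = Gcd (y ` {..<r})"
  have gdvd: "g dvd y k" if "k < r" for k unfolding g_def using that by (simp add: Gcd_dvd)
  have "y k0 \<noteq> 0" using y[OF k0(1)] k0 d by auto
  then have g0: "g \<noteq> 0" using gdvd[OF k0(1)] by auto
  define z where "z = vec r (\<lambda>k. y k div g)"
  have yz: "y k = g * z $ k" if "k < r" for k using gdvd[OF that] that unfolding z_def by simp
  have zc: "z \<in> carrier_vec r" unfolding z_def by simp
  have Nz: "N *\<^sub>v z = 0\<^sub>v n"
  proof (rule eq_vecI)
    fix i assume "i < dim_vec (0\<^sub>v n :: int vec)"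
    then have i: "i < n" by simp
    have "(map_mat of_int N *\<^sub>v v) $ i = (\<Sum>k<r. of_int (N $$ (i,k)) * v $ k)"
      using N v i by (simp add: scalar_prod_def lessThan_atLeast0)
    then have s0: "(\<Sum>k<r. of_int (N $$ (i,k)) * v $ k) = (0::rat)" using Nv i by simp
    have "(of_int (g * (N *\<^sub>v z) $ i) :: rat) = (\<Sum>k<r. of_int (N $$ (i,k)) * of_int (g * z $ k))"
      using N zc i by (simp add: scalar_prod_def lessThan_atLeast0 sum_distrib_left ac_simps)
    also have "\<dots> = (\<Sum>k<r. of_int (N $$ (i,k)) * (of_int d * v $ k))"
      by (rule sum.cong, simp, subst yz[symmetric], simp, subst y, auto)
    also have "\<dots> = of_int d * (\<Sum>k<r. of_int (N $$ (i,k)) * v $ k)"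
      by (simp add: sum_distrib_left ac_simps)
    also have "\<dots> = 0" using s0 by simp
    finally have "g * (N *\<^sub>v z) $ i = 0" by (metis of_int_eq_0_iff)
    then show "(N *\<^sub>v z) $ i = 0\<^sub>v n $ i" using g0 i by simp
  qed (use N in simp)
  have "\<exists>k<r. \<not> p dvd z $ k"
  proof (rule ccontr)
    assume "\<not> ?thesis"
    then have "p * g dvd y k" if "k < r" for k using that yz by auto
    then have "p * g dvd g" unfolding g_def by (intro Gcd_greatest) auto
    then have "p dvd 1" using g0 dvd_mult_cancel_right[of p g 1] by simp
    then show False using p not_prime_unit by blast
  qed
  then show ?thesis using zc Nz by blast
qed



lemma (in vec_space) lin_indpt_empty: "lin_indpt {}"
  by (simp add: lin_dep_def)

lemma rank_modp_le_rat:
  fixes M :: "int mat"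
  assumes M: "M \<in> carrier_mat n nc"
    and Zlem: "\<And>N r v. N \<in> carrier_mat n r \<Longrightarrow> v \<in> carrier_vec r \<Longrightarrow> v \<noteq> 0\<^sub>v r \<Longrightarrow>
      map_mat of_int N *\<^sub>v v = (0\<^sub>v n :: rat vec) \<Longrightarrow>
      \<exists>z. z \<in> carrier_vec r \<and> N *\<^sub>v z = 0\<^sub>v n \<and> (\<exists>k<r. \<not> int CARD('p) dvd z $ k)"
  shows "vec_space.rank n (map_mat (of_int :: int \<Rightarrow> 'p::prime_card mod_ring) M)
      \<le> vec_space.rank n (map_mat (of_int :: int \<Rightarrow> rat) M)"
proof -
  define Mp where "Mp = (map_mat (of_int :: int \<Rightarrow> 'p mod_ring) M)"
  define Mq where "Mq = (map_mat (of_int :: int \<Rightarrow> rat) M)"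
  have Mp: "Mp \<in> carrier_mat n nc" and Mq: "Mq \<in> carrier_mat n nc" using M unfolding Mp_def Mq_def by auto
  let ?P = "\<lambda>T. T \<subseteq> set (cols Mp) \<and> \<not> LinearCombinations.module.lin_dep class_ring (module_vec TYPE('p mod_ring) n) T"
  obtain S where S: "finite S" "maximal S ?P"
    using maximal_exists_superset[of "set (cols Mp)" ?P "{}"] vec_space.lin_indpt_empty by auto
  have rk: "vec_space.rank n Mp = card S" using vec_space.rank_card_indpt[OF Mp S(2)] .
  have Ssub: "S \<subseteq> set (cols Mp)" and Sind: "\<not> LinearCombinations.module.lin_dep class_ring (module_vec TYPE('p mod_ring) n) S"
    using S(2) unfolding maximal_def by auto
  obtain ss where ss: "set ss = S" "distinct ss" using finite_distinct_list[OF S(1)] by blast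
  define g where "g s = (SOME j. j < nc \<and> col Mp j = s)" for s
  have g: "g s < nc \<and> col Mp (g s) = s" if "s \<in> S" for s
  proof -
    from that Ssub obtain j where "j < nc" "col Mp j = s" using Mp
      by (metis cols_length cols_nth in_set_conv_nth carrier_matD(2) subsetD)
    then show ?thesis unfolding g_def by (rule someI[where P = "\<lambda>j. j < nc \<and> col Mp j = s", OF conjI])
  qed
  define r where "r = length ss"
  have r: "r = card S" using ss distinct_card unfolding r_def by metis
  define N where "N = mat n r (\<lambda>(i,k). M $$ (i, g (ss ! k)))"
  have N: "N \<in> carrier_mat n r" unfolding N_def by simp
  define Np where "Np = (map_mat (of_int :: int \<Rightarrow> 'p mod_ring) N)"
  define Nq where "Nq = (map_mat (of_int :: int \<Rightarrow> rat) N)"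
  have Np: "Np \<in> carrier_mat n r" and Nq: "Nq \<in> carrier_mat n r" using N unfolding Np_def Nq_def by auto
  have colNp: "col Np k = ss ! k" if "k < r" for k
  proof -
    have sk: "ss ! k \<in> S" using that ss r_def by auto
    show ?thesis
    proof (rule eq_vecI)
      show "dim_vec (col Np k) = dim_vec (ss ! k)" using Np g[OF sk] Mp
        by (metis carrier_matD(1) dim_col)
      fix i assume "i < dim_vec (ss ! k)"
      then have i: "i < n" using Np g[OF sk] Mp by (metis carrier_matD(1) dim_col)
      have gi: "g (ss ! k) < nc" using g[OF sk] by simp
      have "col Np k $ i = of_int (M $$ (i, g (ss ! k)))" using i that unfolding Np_def N_def by simp
      also have "\<dots> = col Mp (g (ss ! k)) $ i" using i gi M unfolding Mp_def by simp
      finally show "col Np k $ i = ss ! k $ i" using g[OF sk] by simp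
    qed
  qed
  have colsNp: "cols Np = ss"
    by (rule nth_equalityI) (use Np colNp r_def in auto)
  have colNq: "col Nq k = col Mq (g (ss ! k))" if "k < r" for k
  proof -
    have sk: "ss ! k \<in> S" using that ss r_def by auto
    show ?thesis using that g[OF sk] M unfolding Nq_def Mq_def N_def by (auto intro!: eq_vecI)
  qed
  have distq: "distinct (cols Nq)"
  proof -
    have "col Nq k1 \<noteq> col Nq k2" if "k1 < r" "k2 < r" "k1 \<noteq> k2" for k1 k2
    proof
      assume eq: "col Nq k1 = col Nq k2"
      have "col Np k1 = col Np k2"
      proof (rule eq_vecI)
        fix i assume "i < dim_vec (col Np k2)"
        then have i: "i < n" using Np by simp
        have "col Nq k1 $ i = col Nq k2 $ i" using eq by simp
        then have "N $$ (i, k1) = N $$ (i, k2)" using i that N unfolding Nq_def by simp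
        then show "col Np k1 $ i = col Np k2 $ i" using i that N unfolding Np_def by simp
      qed (use Np in simp)
      then show False using colNp that ss(2) r_def by (simp add: nth_eq_iff_index_eq)
    qed
    then show ?thesis using Nq unfolding distinct_conv_nth by (simp add: cols_length)
  qed
  have indq: "\<not> LinearCombinations.module.lin_dep class_ring (module_vec TYPE(rat) n) (set (cols Nq))"
  proof
    assume dep: "LinearCombinations.module.lin_dep class_ring (module_vec TYPE(rat) n) (set (cols Nq))"
    obtain v where v: "v \<in> carrier_vec r" "v \<noteq> 0\<^sub>v r" "Nq *\<^sub>v v = 0\<^sub>v n"
      using vec_space.lin_depE[OF Nq dep distq] by blast
    obtain z where z: "z \<in> carrier_vec r" "N *\<^sub>v z = 0\<^sub>v n" "\<exists>k<r. \<not> int CARD('p) dvd z $ k"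
      using Zlem[OF N v(1) v(2)] v(3) unfolding Nq_def by blast
    define zp where "zp = map_vec (of_int :: int \<Rightarrow> 'p mod_ring) z"
    have zp: "zp \<in> carrier_vec r" using z unfolding zp_def by simp
    have zp0: "zp \<noteq> 0\<^sub>v r"
    proof
      assume "zp = 0\<^sub>v r"
      obtain k where "k < r" "\<not> int CARD('p) dvd z $ k" using z(3) by blast
      moreover have "(of_int (z $ k) :: 'p mod_ring) = 0" using \<open>zp = 0\<^sub>v r\<close> \<open>k < r\<close> z(1)
        unfolding zp_def by (metis index_map_vec(1) index_zero_vec(1) carrier_vecD)
      ultimately show False unfolding of_int_of_int_mod_ring by (transfer, auto)
    qed
    have "Np *\<^sub>v zp = map_vec of_int (N *\<^sub>v z)"
      unfolding Np_def zp_def by (rule of_int_hom.mult_mat_vec_hom[OF N z(1), symmetric])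
    also have "\<dots> = 0\<^sub>v n" using z(2) by auto
    finally have "Np *\<^sub>v zp = 0\<^sub>v n" .
    have distp: "distinct (cols Np)" using colsNp ss by simp
    have "LinearCombinations.module.lin_dep class_ring (module_vec TYPE('p mod_ring) n) (set (cols Np))"
      using vec_space.lin_depI[OF Np zp zp0 \<open>Np *\<^sub>v zp = 0\<^sub>v n\<close> distp] .
    then show False using Sind colsNp ss by simp
  qed
  have sub: "set (cols Nq) \<subseteq> set (cols Mq)"
  proof
    fix c assume "c \<in> set (cols Nq)"
    then obtain k where "k < r" "c = col Nq k" using Nq
      by (metis cols_length cols_nth in_set_conv_nth carrier_matD(2))
    then have "c = col Mq (g (ss ! k))" using colNq by simp
    moreover have "g (ss ! k) < nc" using g \<open>k < r\<close> ss r_def by auto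
    ultimately show "c \<in> set (cols Mq)" using Mq by (simp add: cols_def)
  qed
  have "card (set (cols Nq)) \<le> vec_space.rank n Mq"
    using vec_space.rank_ge_card_indpt[OF Mq sub indq] .
  moreover have "card (set (cols Nq)) = r" using distq Nq distinct_card by (metis cols_length carrier_matD(2))
  ultimately show ?thesis using rk r unfolding Mp_def Mq_def by simp
qed




lemma (in vec_space) own_span_mem: "T \<subseteq> carrier_vec n \<Longrightarrow> x \<in> T \<Longrightarrow> x \<in> span T"
  using in_own_span by auto

lemma (in vec_space) span_subsetI2: "ws \<subseteq> carrier_vec n \<Longrightarrow> us \<subseteq> span ws \<Longrightarrow> span us \<subseteq> span ws"
  using span_subsetI by blast

lemma (in vec_space) prod_in_span2: "b \<in> carrier_vec n \<Longrightarrow> S \<subseteq> carrier_vec n \<Longrightarrow> a = 0 \<or> b \<in> span S \<Longrightarrow> a \<cdot>\<^sub>v b \<in> span S"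
  using prod_in_span by blast

lemma card_odd_below: "card {k. k < n \<and> odd k} = n div 2"
proof (induction n)
  case (Suc n)
  have "{k. k < Suc n \<and> odd k} = (if odd n then insert n {k. k < n \<and> odd k} else {k. k < n \<and> odd k})"
    by (auto simp: less_Suc_eq)
  then show ?case using Suc by (auto simp: elim!: oddE evenE)
qed simp

lemma card_even_below: "card {k. k < n \<and> even k} = (n + 1) div 2"
proof (induction n)
  case (Suc n)
  have "{k. k < Suc n \<and> even k} = (if even n then insert n {k. k < n \<and> even k} else {k. k < n \<and> even k})"
    by (auto simp: less_Suc_eq)
  then show ?case using Suc by (auto simp: elim!: oddE evenE)
qed simp

lemma smult_mat_mult_vec: "A \<in> carrier_mat nr nc \<Longrightarrow> v \<in> carrier_vec nc \<Longrightarrow> (k \<cdot>\<^sub>m A) *\<^sub>v v = k \<cdot>\<^sub>v (A *\<^sub>v v)"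
  by (intro eq_vecI) (auto simp: scalar_prod_def sum_distrib_left ac_simps)

lemma of_int_mod_ring_eq_0: "(of_int x :: 'a::prime_card mod_ring) = 0 \<longleftrightarrow> int CARD('a) dvd x"
  unfolding of_int_of_int_mod_ring by (transfer, auto)

theorem lemma3p7:
  fixes n :: nat and Arc :: "(nat \<times> nat) set" and Q0 :: "rat mat"
  assumes G: "in_G n Arc"
    and Q0: "regular_rat_orthogonal n Q0"
    and Q0_conj: "Q0\<^sup>T * map_mat of_int (skew_adj n Arc) * Q0
                  = map_mat of_int (skew_adj n (converse_graph Arc))"
    and p_odd: "odd CARD('p::prime_card)"
    and p_ndvd: "\<not> CARD('p) dvd level Q0"
  shows "let l0 = level Q0; Qb = scaled_int_mat l0 Q0;
             rm = vec_space.rank n (mod_p_mat (of_nat l0 \<cdot>\<^sub>m 1\<^sub>m n - Qb) :: 'p mod_ring mat);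
             rp = vec_space.rank n (mod_p_mat (of_nat l0 \<cdot>\<^sub>m 1\<^sub>m n + Qb) :: 'p mod_ring mat)
         in (even n \<longrightarrow> rm = n div 2 \<and> rp = n div 2) \<and>
            (odd n \<longrightarrow> rm = (n - 1) div 2 \<and> rp = (n + 1) div 2)"
proof -
  define S where "S = skew_adj n Arc"
  define SQ where "SQ = map_mat (of_int :: int \<Rightarrow> rat) S"
  define e where "e = vec n (\<lambda>_. 1 :: rat)"
  define W where "W = walk_matrix n Arc"
  define WQ where "WQ = map_mat (of_int :: int \<Rightarrow> rat) W"
  define l0 where "l0 = level Q0"
  define Qb where "Qb = scaled_int_mat l0 Q0"
  have orient: "oriented_graph n Arc" using G unfolding in_G_def by blast
  have Sc: "S \<in> carrier_mat n n" unfolding S_def skew_adj_def by simp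
  have SQc: "SQ \<in> carrier_mat n n" using Sc unfolding SQ_def by simp
  have ec: "e \<in> carrier_vec n" unfolding e_def by simp
  have Q0c: "Q0 \<in> carrier_mat n n" and Q0TQ0: "Q0\<^sup>T * Q0 = 1\<^sub>m n" and Q0e: "Q0 *\<^sub>v e = e"
    using Q0 unfolding regular_rat_orthogonal_def e_def by auto
  have Q0TC: "Q0\<^sup>T \<in> carrier_mat n n" using Q0c by simp
  have Q0Q0T: "Q0 * Q0\<^sup>T = 1\<^sub>m n" using mat_mult_left_right_inverse[OF Q0TC Q0c Q0TQ0] .
  have conv: "map_mat (of_int :: int \<Rightarrow> rat) (skew_adj n (converse_graph Arc)) = (-1) \<cdot>\<^sub>m SQ"
  proof (rule eq_matI)
    fix i j assume ij: "i < dim_row ((-1) \<cdot>\<^sub>m SQ)" "j < dim_col ((-1) \<cdot>\<^sub>m SQ)"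
    then have "i < n" "j < n" using SQc by auto
    then show "map_mat of_int (skew_adj n (converse_graph Arc)) $$ (i, j) = ((-1) \<cdot>\<^sub>m SQ) $$ (i, j)"
      using orient unfolding SQ_def S_def skew_adj_def converse_graph_def oriented_graph_def by auto
  qed (auto simp: skew_adj_def SQ_def S_def)
  have anti: "Q0 * SQ = (-1) \<cdot>\<^sub>m (SQ * Q0)"
  proof -
    have h: "Q0\<^sup>T * SQ * Q0 = (-1) \<cdot>\<^sub>m SQ" using Q0_conj conv unfolding SQ_def S_def by simp
    have "SQ * Q0 = (Q0 * Q0\<^sup>T) * SQ * Q0" using Q0Q0T SQc by simp
    also have "\<dots> = Q0 * (Q0\<^sup>T * SQ * Q0)" using Q0c Q0TC SQc by (simp add: assoc_mult_mat[of _ n n _ n _ n])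
    also have "\<dots> = (-1) \<cdot>\<^sub>m (Q0 * SQ)" unfolding h using mult_smult_distrib[OF Q0c SQc] .
    finally have "SQ * Q0 = (-1) \<cdot>\<^sub>m (Q0 * SQ)" .
    then have "(-1) \<cdot>\<^sub>m (SQ * Q0) = (-1) \<cdot>\<^sub>m ((-1) \<cdot>\<^sub>m (Q0 * SQ))" by simp
    also have "\<dots> = Q0 * SQ" by (auto intro!: eq_matI)
    finally show ?thesis by simp
  qed
  have powanti: "Q0 * SQ ^\<^sub>m k = (-1)^k \<cdot>\<^sub>m (SQ ^\<^sub>m k * Q0)" for k
  proof (induction k)
    case 0
    then show ?case using Q0c SQc by (auto intro!: eq_matI)
  next
    case (Suc k)
    have Pk: "SQ ^\<^sub>m k \<in> carrier_mat n n" using SQc by simp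
    have "Q0 * SQ ^\<^sub>m Suc k = (Q0 * SQ ^\<^sub>m k) * SQ" using assoc_mult_mat[OF Q0c Pk SQc] by simp
    also have "\<dots> = (-1)^k \<cdot>\<^sub>m ((SQ ^\<^sub>m k * Q0) * SQ)"
      unfolding Suc by (rule mult_smult_assoc_mat[OF mult_carrier_mat[OF Pk Q0c] SQc])
    also have "\<dots> = (-1)^k \<cdot>\<^sub>m (SQ ^\<^sub>m k * (Q0 * SQ))"
      by (simp only: assoc_mult_mat[OF Pk Q0c SQc])
    also have "SQ ^\<^sub>m k * (Q0 * SQ) = (-1) \<cdot>\<^sub>m (SQ ^\<^sub>m k * (SQ * Q0))"
      unfolding anti by (rule mult_smult_distrib[OF Pk mult_carrier_mat[OF SQc Q0c]])
    also have "SQ ^\<^sub>m k * (SQ * Q0) = SQ ^\<^sub>m Suc k * Q0"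
      by (simp only: assoc_mult_mat[OF Pk SQc Q0c] pow_mat.simps)
    also have "(-1)^k \<cdot>\<^sub>m ((-1) \<cdot>\<^sub>m (SQ ^\<^sub>m Suc k * Q0)) = (-1)^Suc k \<cdot>\<^sub>m (SQ ^\<^sub>m Suc k * Q0)"
      by (auto intro!: eq_matI)
    finally show ?case .
  qed
  have colW: "col WQ k = SQ ^\<^sub>m k *\<^sub>v e" if "k < n" for k
  proof -
    have "map_vec (of_int :: int \<Rightarrow> rat) (S ^\<^sub>m k *\<^sub>v vec n (\<lambda>_. 1)) = map_mat of_int (S ^\<^sub>m k) *\<^sub>v map_vec of_int (vec n (\<lambda>_. 1))"
      using of_int_hom.mult_mat_vec_hom[of "S ^\<^sub>m k" n n "vec n (\<lambda>_. 1)"] Sc by simp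
    also have "map_mat (of_int :: int \<Rightarrow> rat) (S ^\<^sub>m k) = SQ ^\<^sub>m k"
      unfolding SQ_def by (rule of_int_hom.mat_hom_pow[OF Sc])
    also have "map_vec (of_int :: int \<Rightarrow> rat) (vec n (\<lambda>_. 1)) = e" unfolding e_def by auto
    finally have *: "map_vec of_int (S ^\<^sub>m k *\<^sub>v vec n (\<lambda>_. 1)) = SQ ^\<^sub>m k *\<^sub>v e" .
    show ?thesis
    proof (rule eq_vecI)
      fix i assume "i < dim_vec (SQ ^\<^sub>m k *\<^sub>v e)"
      then have i: "i < n" using SQc by simp
      have "col WQ k $ i = of_int ((S ^\<^sub>m k *\<^sub>v vec n (\<lambda>_. 1)) $ i)"
        using i that unfolding WQ_def W_def walk_matrix_def S_def by simp
      also have "\<dots> = map_vec (of_int :: int \<Rightarrow> rat) (S ^\<^sub>m k *\<^sub>v vec n (\<lambda>_. 1)) $ i" using i Sc by simp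
      also have "\<dots> = (SQ ^\<^sub>m k *\<^sub>v e) $ i" unfolding * ..
      finally show "col WQ k $ i = (SQ ^\<^sub>m k *\<^sub>v e) $ i" .
    qed (use that SQc in \<open>simp add: WQ_def W_def walk_matrix_def\<close>)
  qed
  have WQc: "WQ \<in> carrier_mat n n" unfolding WQ_def W_def walk_matrix_def by simp
  have eig: "Q0 *\<^sub>v col WQ k = (-1)^k \<cdot>\<^sub>v col WQ k" if "k < n" for k
  proof -
    have Pk: "SQ ^\<^sub>m k \<in> carrier_mat n n" using SQc by simp
    have "Q0 *\<^sub>v (SQ ^\<^sub>m k *\<^sub>v e) = (Q0 * SQ ^\<^sub>m k) *\<^sub>v e" using Q0c Pk ec by simp
    also have "\<dots> = (-1)^k \<cdot>\<^sub>v (SQ ^\<^sub>m k *\<^sub>v (Q0 *\<^sub>v e))"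
      unfolding powanti smult_mat_mult_vec[OF mult_carrier_mat[OF Pk Q0c] ec] assoc_mult_mat_vec[OF Pk Q0c ec] ..
    finally show ?thesis unfolding colW[OF that] Q0e .
  qed
  have detW: "det WQ \<noteq> 0"
  proof -
    obtain m :: int where m: "det W = 2 ^ (n div 2) * m" "odd m" using G unfolding in_G_def W_def by blast
    have "det W \<noteq> 0" using m by auto
    then show ?thesis unfolding WQ_def of_int_hom.hom_det by simp
  qed
  obtain WI where WIc: "WI \<in> carrier_mat n n" and WWI: "WQ * WI = 1\<^sub>m n"
    using det_non_zero_imp_unit[OF WQc detW, of undefined] unfolding Units_def ring_mat_simps by auto
  have ex: "\<exists>k::nat. 0 < k \<and> (\<forall>i < dim_row Q0. \<forall>j < dim_col Q0. of_nat k * Q0 $$ (i, j) \<in> \<int>)"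
  proof -
    obtain d :: int where d: "d > 0" "\<forall>x\<in>{..<n} \<times> {..<n}. of_int d * (\<lambda>(i,j). Q0 $$ (i,j)) x \<in> \<int>"
      using common_denom[of "{..<n} \<times> {..<n}" "\<lambda>(i,j). Q0 $$ (i,j)"] by auto
    show ?thesis
      by (rule exI[of _ "nat d"]) (use d Q0c in auto)
  qed
  have l0: "0 < l0" "\<forall>i < n. \<forall>j < n. of_nat l0 * Q0 $$ (i, j) \<in> \<int>"
    using LeastI_ex[OF ex] Q0c unfolding l0_def level_def by auto
  have Qbc: "Qb \<in> carrier_mat n n" using Q0c unfolding Qb_def scaled_int_mat_def by auto
  have Qbe: "of_int (Qb $$ (i, j)) = of_nat l0 * Q0 $$ (i, j)" if "i < n" "j < n" for i j
  proof -
    have "of_nat l0 * Q0 $$ (i, j) \<in> \<int>" using l0 that by blast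
    then show ?thesis using that Q0c unfolding Qb_def scaled_int_mat_def
      by (auto elim!: Ints_cases)
  qed
  have rankQ: "vec_space.rank n (of_nat l0 \<cdot>\<^sub>m 1\<^sub>m n + s \<cdot>\<^sub>m Q0) \<le> card {k. k < n \<and> P k}"
    if hP: "\<forall>k<n. \<not> P k \<longrightarrow> of_nat l0 + s * (-1)^k = (0::rat)" for s P
  proof -
    define X where "X = of_nat l0 \<cdot>\<^sub>m 1\<^sub>m n + s \<cdot>\<^sub>m Q0"
    have Xc: "X \<in> carrier_mat n n" unfolding X_def using Q0c by simp
    define T where "T = (\<lambda>k. col WQ k) ` {k. k < n \<and> P k}"
    have Tc: "T \<subseteq> carrier_vec n" unfolding T_def using WQc by auto
    have Tf: "finite T" unfolding T_def by simp
    have Tcard: "card T \<le> card {k. k < n \<and> P k}" unfolding T_def by (rule card_image_le) simp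
    have XW: "X * WQ \<in> carrier_mat n n" using Xc WQc by simp
    have sub1: "set (cols (X * WQ)) \<subseteq> LinearCombinations.module.span class_ring (module_vec TYPE(rat) n) T"
    proof
      fix c assume "c \<in> set (cols (X * WQ))"
      then obtain k where k: "k < n" "c = col (X * WQ) k" using XW
        by (metis cols_length cols_nth in_set_conv_nth carrier_matD(2))
      have wk: "col WQ k \<in> carrier_vec n" using WQc k by simp
      have "c = X *\<^sub>v col WQ k" unfolding k(2) by (rule col_mult2[OF Xc WQc k(1)])
      also have "\<dots> = (of_nat l0 + s * (-1)^k) \<cdot>\<^sub>v col WQ k"
        unfolding X_def using Q0c wk eig[OF k(1)]
        by (simp add: add_mult_distrib_mat_vec[of _ n n] smult_mat_mult_vec[of _ n n] smult_smult_assoc add_smult_distrib_vec)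
      finally have c: "c = (of_nat l0 + s * (-1)^k) \<cdot>\<^sub>v col WQ k" .
      have "(of_nat l0 + s * (-1)^k) = 0 \<or> col WQ k \<in> LinearCombinations.module.span class_ring (module_vec TYPE(rat) n) T"
      proof (cases "P k")
        case True
        then have "col WQ k \<in> T" unfolding T_def using k by auto
        then show ?thesis using vec_space.own_span_mem[OF Tc] by auto
      qed (use hP k in auto)
      then show "c \<in> LinearCombinations.module.span class_ring (module_vec TYPE(rat) n) T" unfolding c by (rule vec_space.prod_in_span2[OF wk Tc])
    qed
    have "set (cols X) = set (cols (X * WQ * WI))" using Xc WQc WIc WWI by simp
    also have "\<dots> \<subseteq> LinearCombinations.module.span class_ring (module_vec TYPE(rat) n) (set (cols (X * WQ)))"
      using vec_space.cols_mult_in_span[OF XW WIc] .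
    also have "\<dots> \<subseteq> LinearCombinations.module.span class_ring (module_vec TYPE(rat) n) T"
      using vec_space.span_subsetI2[OF Tc sub1] .
    finally have "set (cols X) \<subseteq> LinearCombinations.module.span class_ring (module_vec TYPE(rat) n) T" .
    then have "vec_space.rank n X \<le> card T" using vec_space.rank_le_card_span[OF Xc Tc Tf] by simp
    then show ?thesis using Tcard unfolding X_def by simp
  qed
  define A where "A = of_nat l0 \<cdot>\<^sub>m 1\<^sub>m n - Qb"
  define B where "B = of_nat l0 \<cdot>\<^sub>m 1\<^sub>m n + Qb"
  have Ac: "A \<in> carrier_mat n n" and Bc: "B \<in> carrier_mat n n" unfolding A_def B_def using Qbc by auto
  have AQ: "map_mat (of_int :: int \<Rightarrow> rat) A = of_nat l0 \<cdot>\<^sub>m 1\<^sub>m n + (- of_nat l0) \<cdot>\<^sub>m Q0"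
    by (rule eq_matI) (use Qbc Q0c Qbe in \<open>auto simp: A_def\<close>)
  have BQ: "map_mat (of_int :: int \<Rightarrow> rat) B = of_nat l0 \<cdot>\<^sub>m 1\<^sub>m n + (of_nat l0) \<cdot>\<^sub>m Q0"
    by (rule eq_matI) (use Qbc Q0c Qbe in \<open>auto simp: B_def\<close>)
  have rAQ: "vec_space.rank n (map_mat (of_int :: int \<Rightarrow> rat) A) \<le> n div 2"
    unfolding AQ using rankQ[of odd "- of_nat l0"] card_odd_below[of n] by (auto elim!: evenE)
  have rBQ: "vec_space.rank n (map_mat (of_int :: int \<Rightarrow> rat) B) \<le> (n + 1) div 2"
    unfolding BQ using rankQ[of even "of_nat l0"] card_even_below[of n] by (auto elim!: oddE)
  have primep: "prime (int CARD('p))" using prime_card[where 'a='p] by simp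
  have Zlem: "\<And>N r v. N \<in> carrier_mat n r \<Longrightarrow> v \<in> carrier_vec r \<Longrightarrow> v \<noteq> 0\<^sub>v r \<Longrightarrow>
      map_mat of_int N *\<^sub>v v = (0\<^sub>v n :: rat vec) \<Longrightarrow>
      \<exists>z. z \<in> carrier_vec r \<and> N *\<^sub>v z = 0\<^sub>v n \<and> (\<exists>k<r. \<not> int CARD('p) dvd z $ k)"
  proof -
    fix N :: "int mat" and r and v :: "rat vec"
    assume a: "N \<in> carrier_mat n r" "v \<in> carrier_vec r" "v \<noteq> 0\<^sub>v r" "map_mat of_int N *\<^sub>v v = (0\<^sub>v n :: rat vec)"
    show "\<exists>z. z \<in> carrier_vec r \<and> N *\<^sub>v z = 0\<^sub>v n \<and> (\<exists>k<r. \<not> int CARD('p) dvd z $ k)"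
      by (rule rat_kernel_to_int[OF a primep])
  qed
  define Ap where "Ap = (mod_p_mat A :: 'p mod_ring mat)"
  define Bp where "Bp = (mod_p_mat B :: 'p mod_ring mat)"
  have rAp: "vec_space.rank n Ap \<le> n div 2"
  proof -
    have "vec_space.rank n (map_mat of_int A :: 'p mod_ring mat) \<le> vec_space.rank n (map_mat (of_int :: int \<Rightarrow> rat) A)"
      by (rule rank_modp_le_rat[OF Ac], rule Zlem, assumption+)
    then show ?thesis using rAQ unfolding Ap_def mod_p_mat_def by linarith
  qed
  have rBp: "vec_space.rank n Bp \<le> (n + 1) div 2"
  proof -
    have "vec_space.rank n (map_mat of_int B :: 'p mod_ring mat) \<le> vec_space.rank n (map_mat (of_int :: int \<Rightarrow> rat) B)"
      by (rule rank_modp_le_rat[OF Bc], rule Zlem, assumption+)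
    then show ?thesis using rBQ unfolding Bp_def mod_p_mat_def by linarith
  qed
  have Apc: "Ap \<in> carrier_mat n n" and Bpc: "Bp \<in> carrier_mat n n"
    using Ac Bc unfolding Ap_def Bp_def mod_p_mat_def by auto
  have sumAB: "Ap + Bp = (of_int (2 * int l0) :: 'p mod_ring) \<cdot>\<^sub>m 1\<^sub>m n"
    by (rule eq_matI) (use Qbc in \<open>auto simp: Ap_def Bp_def A_def B_def mod_p_mat_def\<close>)
  have c0: "(of_int (2 * int l0) :: 'p mod_ring) \<noteq> 0"
  proof
    assume h: "(of_int (2 * int l0) :: 'p mod_ring) = 0"
    have d: "int CARD('p) dvd 2 * int l0" using h of_int_mod_ring_eq_0[of "2 * int l0", where 'a='p] by simp
    have nd: "\<not> int CARD('p) dvd int l0" using p_ndvd unfolding l0_def by (simp add: int_dvd_int_iff)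
    have p2: "CARD('p) \<ge> 2" using prime_ge_2_nat[OF prime_card[where 'a='p]] .
    have p3: "CARD('p) \<noteq> 2" using p_odd by auto
    have nd2: "\<not> int CARD('p) dvd 2"
    proof
      assume "int CARD('p) dvd 2"
      then have "int CARD('p) \<le> 2" using zdvd_imp_le[of "int CARD('p)" 2] by linarith
      then show False using p2 p3 by linarith
    qed
    show False using d nd nd2 prime_dvd_mult_iff[OF primep, of 2 "int l0"] by blast
  qed
  have "det (Ap + Bp) \<noteq> 0" unfolding sumAB using c0 by simp
  then have "vec_space.rank n (Ap + Bp) = n" using vec_space.det_rank_iff[of "Ap + Bp" n] Apc Bpc by simp
  then have "n \<le> vec_space.rank n Ap + vec_space.rank n Bp"
    using vec_space.rank_subadditive[OF Apc Bpc] by simp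
  then have rA: "vec_space.rank n Ap = n div 2" and rB: "vec_space.rank n Bp = (n + 1) div 2"
    using rAp rBp by linarith+
  show ?thesis
    unfolding Let_def l0_def[symmetric] Qb_def[symmetric] A_def[symmetric] B_def[symmetric]
      Ap_def[symmetric] Bp_def[symmetric] rA rB
    by (auto elim!: oddE evenE)
qed


end
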